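(* Let $\mu$ be a probability measure on $\mathrm{Homeo}_+(\mathbb{R})$ with finite or countable support having the shiftability property. If there exist $x,y\in\mathbb{R}$ with $\phi_+(x)>0$ and $\phi_-(y)>0$, then $\phi_+(z)+\phi_-(z)=1$ for every $z\in\mathbb{R}$.
   Context: Setup. Let $\mu$ be a probability measure on the group $\mathrm{Homeo}_+(\mathbb{R})$ of orientation-preserving homeomorphisms of $\mathbb{R}$, supported on a finite or countable set $\{f_1,f_2,\dots\}$ with $p_i=\mu(\{f_i\})>0$, $\sum_i p_i=1$. Let $g_1,g_2,\dots$ be i.i.d. random maps with law $\mu$, and set $F_0=\mathrm{id}$, $F_n=g_n\circ\cdots\circ g_1$. For $x\in\mathbb{R}$ let $\phi_+(x)=\mathbb{P}(\lim_n F_n(x)=+\infty)$ and $\phi_-(x)=\mathbb{P}(\lim_n F_n(x)=-\infty)$. The system has the shiftability property if for every $x\in\mathbb{R}$ there exist $f,g$ with $\mu(\{f\})>0$, $\mu(\{g\})>0$ and $g(x)<x<f(x)$. *)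

theory Defs
  imports "HOL-Probability.Probability"
begin

definition homeo_plus :: "(real \<Rightarrow> real) \<Rightarrow> bool" where
  "homeo_plus f \<longleftrightarrow> (\<exists>g. homeomorphism UNIV UNIV f g) \<and> strict_mono f"

text \<open>The random walk F_n = g_n o ... o g_1 driven by the stream (g_1, g_2, ...),
  where g_(k+1) is the k-th element (0-indexed) of the stream.\<close>
primrec walk :: "(real \<Rightarrow> real) stream \<Rightarrow> nat \<Rightarrow> real \<Rightarrow> real" where
  "walk \<omega> 0 x = x"
| "walk \<omega> (Suc n) x = (\<omega> !! n) (walk \<omega> n x)"

text \<open>The law of the i.i.d. sequence g_1, g_2, ... (completed, so that the
  divergence events are measurable).\<close>
definition walk_space :: "(real \<Rightarrow> real) pmf \<Rightarrow> (real \<Rightarrow> real) stream measure" where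
  "walk_space \<mu> = completion (stream_space (measure_pmf \<mu>))"

definition phi_plus :: "(real \<Rightarrow> real) pmf \<Rightarrow> real \<Rightarrow> real" where
  "phi_plus \<mu> x = measure (walk_space \<mu>)
     {\<omega> \<in> space (walk_space \<mu>). filterlim (\<lambda>n. walk \<omega> n x) at_top sequentially}"

definition phi_minus :: "(real \<Rightarrow> real) pmf \<Rightarrow> real \<Rightarrow> real" where
  "phi_minus \<mu> x = measure (walk_space \<mu>)
     {\<omega> \<in> space (walk_space \<mu>). filterlim (\<lambda>n. walk \<omega> n x) at_bot sequentially}"

definition shiftable :: "(real \<Rightarrow> real) pmf \<Rightarrow> bool" where
  "shiftable \<mu> \<longleftrightarrow> (\<forall>x. \<exists>f \<in> set_pmf \<mu>. \<exists>g \<in> set_pmf \<mu>. g x < x \<and> x < f x)"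

end

theory Submission
  imports Defs
begin

definition wl :: "(real \<Rightarrow> real) list \<Rightarrow> real \<Rightarrow> real" where
  "wl l y = fold (\<lambda>f z. f z) l y"

lemma wl_Nil[simp]: "wl [] y = y" by (simp add: wl_def)
lemma wl_Cons[simp]: "wl (f # l) y = wl l (f y)" by (simp add: wl_def)
lemma wl_snoc: "wl (l @ [f]) y = f (wl l y)" by (simp add: wl_def)

lemma walk_stake: "walk \<omega> n y = wl (stake n \<omega>) y"
  by (induct n) (simp_all add: stake_Suc wl_snoc del: stake.simps(2))

lemma walk_Stream: "walk (f ## \<omega>) (Suc n) y = walk \<omega> n (f y)"
  by (induct n) auto

locale wsetting =
  fixes \<mu> :: "(real \<Rightarrow> real) pmf"
  assumes homeo: "\<forall>f \<in> set_pmf \<mu>. homeo_plus f"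
begin

abbreviation "S \<equiv> set_pmf \<mu>"
abbreviation "\<Omega> \<equiv> streams S"
abbreviation "M \<equiv> stream_space (measure_pmf \<mu>)"

definition Cyl :: "nat \<Rightarrow> (real \<Rightarrow> real) list set \<Rightarrow> (real \<Rightarrow> real) stream set" where
  "Cyl n B = {\<omega>\<in>\<Omega>. stake n \<omega> \<in> B}"

definition Dn :: "real \<Rightarrow> (real \<Rightarrow> real) stream set" where
  "Dn y = {\<omega>\<in>\<Omega>. filterlim (\<lambda>n. walk \<omega> n y) at_bot sequentially}"
definition Up :: "real \<Rightarrow> (real \<Rightarrow> real) stream set" where
  "Up y = {\<omega>\<in>\<Omega>. filterlim (\<lambda>n. walk \<omega> n y) at_top sequentially}"

lemma space_M[simp]: "space M = UNIV"
  by (simp add: space_stream_space)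

lemma sets_M: "sets M = sets (stream_space (count_space UNIV))"
  by (rule sets_stream_space_cong) simp

lemma prob_M: "prob_space M"
  by (rule prob_space.prob_space_stream_space) (rule prob_space_measure_pmf)

lemma Omega_sets[measurable]: "\<Omega> \<in> sets M"
  by (rule streams_sets) simp

lemma sstart_M: "sstart S l \<in> sets M"
  unfolding sets_M by (rule sets_sstart)

lemma Cyl_eq: "Cyl n B = (\<Union>l\<in>{l\<in>lists S. length l = n \<and> l \<in> B}. sstart S l)"
proof -
  have "\<omega> \<in> sstart S l \<longleftrightarrow> \<omega> \<in> \<Omega> \<and> stake (length l) \<omega> = l" if "l \<in> lists S" for \<omega> l
  proof
    assume "\<omega> \<in> sstart S l"
    moreover then have "\<omega> \<in> \<Omega>" using sstart_in_streams[OF that] by auto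
    ultimately show "\<omega> \<in> \<Omega> \<and> stake (length l) \<omega> = l"
      by (auto simp: sstart_eq intro!: nth_equalityI)
  next
    assume "\<omega> \<in> \<Omega> \<and> stake (length l) \<omega> = l"
    then show "\<omega> \<in> sstart S l" by (auto simp: sstart_eq) (metis stake_nth)
  qed
  moreover have "\<omega> \<in> \<Omega> \<Longrightarrow> stake n \<omega> \<in> lists S" for \<omega>
    by (auto simp: in_set_conv_nth streams_iff_snth)
  ultimately show ?thesis unfolding Cyl_def by fastforce
qed

lemma Cyl_sets[measurable]: "Cyl n B \<in> sets M"
  unfolding Cyl_eq
  by (intro sets.countable_UN' countable_Collect countable_lists) (auto simp: sstart_M)

lemma pred_Cyl[measurable]: "Measurable.pred M (\<lambda>\<omega>. \<omega> \<in> Cyl n B)"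
  using Cyl_sets[of n B] by (simp add: pred_def)


lemma at_bot_nat: "filterlim f at_bot sequentially \<longleftrightarrow> (\<forall>k::nat. \<exists>N. \<forall>n\<ge>N. f n \<le> - real k)"
proof
  assume "filterlim f at_bot sequentially"
  then show "\<forall>k::nat. \<exists>N. \<forall>n\<ge>N. f n \<le> - real k"
    by (auto simp: filterlim_at_bot eventually_sequentially)
next
  assume A: "\<forall>k::nat. \<exists>N. \<forall>n\<ge>N. f n \<le> - real k"
  show "filterlim f at_bot sequentially" unfolding filterlim_at_bot eventually_sequentially
  proof
    fix Z :: real
    obtain k :: nat where "- Z \<le> real k" using real_arch_simple by blast
    with A show "\<exists>N. \<forall>n\<ge>N. f n \<le> Z" by (meson order.trans neg_le_iff_le minus_le_iff)
  qed
qed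

lemma walk_Cyl: "\<omega> \<in> \<Omega> \<Longrightarrow> \<omega> \<in> Cyl n {l. wl l y \<le> c} \<longleftrightarrow> walk \<omega> n y \<le> c"
  "\<omega> \<in> \<Omega> \<Longrightarrow> \<omega> \<in> Cyl n {l. c \<le> wl l y} \<longleftrightarrow> c \<le> walk \<omega> n y"
  by (simp_all add: Cyl_def walk_stake)

lemma Dn_eq: "Dn y = {\<omega> \<in> space M. \<forall>k::nat. \<exists>N. \<forall>n. N \<le> n \<longrightarrow> \<omega> \<in> Cyl n {l. wl l y \<le> - real k}}"
proof (rule set_eqI, rule iffI)
  fix x assume "x \<in> Dn y" then show "x \<in> {\<omega> \<in> space M. \<forall>k::nat. \<exists>N. \<forall>n. N \<le> n \<longrightarrow> \<omega> \<in> Cyl n {l. wl l y \<le> - real k}}"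
    by (auto simp: Dn_def at_bot_nat walk_Cyl)
next
  fix x assume A: "x \<in> {\<omega> \<in> space M. \<forall>k::nat. \<exists>N. \<forall>n. N \<le> n \<longrightarrow> \<omega> \<in> Cyl n {l. wl l y \<le> - real k}}"
  then obtain N where "x \<in> Cyl N {l. wl l y \<le> - real (0::nat)}" by blast
  then have "x \<in> \<Omega>" by (simp add: Cyl_def)
  with A show "x \<in> Dn y" by (auto simp: Dn_def at_bot_nat walk_Cyl)
qed

lemma Dn_sets[measurable]: "Dn y \<in> sets M"
  unfolding Dn_eq by measurable

lemma Dn_sub: "Dn y \<subseteq> \<Omega>" by (auto simp: Dn_def)
lemma Up_sub: "Up y \<subseteq> \<Omega>" by (auto simp: Up_def)

lemma at_top_nat: "filterlim f at_top sequentially \<longleftrightarrow> (\<forall>k::nat. \<exists>N. \<forall>n\<ge>N. real k \<le> f n)"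
proof
  assume "filterlim f at_top sequentially"
  then show "\<forall>k::nat. \<exists>N. \<forall>n\<ge>N. real k \<le> f n"
    by (auto simp: filterlim_at_top eventually_sequentially)
next
  assume A: "\<forall>k::nat. \<exists>N. \<forall>n\<ge>N. real k \<le> f n"
  show "filterlim f at_top sequentially" unfolding filterlim_at_top eventually_sequentially
  proof
    fix Z :: real
    obtain k :: nat where "Z \<le> real k" using real_arch_simple by blast
    with A show "\<exists>N. \<forall>n\<ge>N. Z \<le> f n" by (meson order.trans)
  qed
qed

lemma Up_eq: "Up y = {\<omega> \<in> space M. \<forall>k::nat. \<exists>N. \<forall>n. N \<le> n \<longrightarrow> \<omega> \<in> Cyl n {l. real k \<le> wl l y}}"
proof (rule set_eqI, rule iffI)
  fix x assume "x \<in> Up y" then show "x \<in> {\<omega> \<in> space M. \<forall>k::nat. \<exists>N. \<forall>n. N \<le> n \<longrightarrow> \<omega> \<in> Cyl n {l. real k \<le> wl l y}}"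
    by (auto simp: Up_def at_top_nat walk_Cyl)
next
  fix x assume A: "x \<in> {\<omega> \<in> space M. \<forall>k::nat. \<exists>N. \<forall>n. N \<le> n \<longrightarrow> \<omega> \<in> Cyl n {l. real k \<le> wl l y}}"
  then obtain N where "x \<in> Cyl N {l. real (0::nat) \<le> wl l y}" by blast
  then have "x \<in> \<Omega>" by (simp add: Cyl_def)
  with A show "x \<in> Up y" by (auto simp: Up_def at_top_nat walk_Cyl)
qed

lemma Up_sets[measurable]: "Up y \<in> sets M"
  unfolding Up_eq by measurable

definition Lv :: "real \<Rightarrow> real \<Rightarrow> (real \<Rightarrow> real) stream set" where
  "Lv c y = {\<omega>\<in>\<Omega>. (\<exists>\<^sub>\<infinity>n. walk \<omega> n y \<le> c) \<and> \<omega> \<notin> Dn y}"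

lemma Lv_eq: "Lv c y = {\<omega> \<in> space M. (\<forall>m. \<exists>n. m \<le> n \<and> \<omega> \<in> Cyl n {l. wl l y \<le> c}) \<and> \<omega> \<notin> Dn y}"
proof (rule set_eqI, rule iffI)
  fix x assume "x \<in> Lv c y" then show "x \<in> {\<omega> \<in> space M. (\<forall>m. \<exists>n. m \<le> n \<and> \<omega> \<in> Cyl n {l. wl l y \<le> c}) \<and> \<omega> \<notin> Dn y}"
    by (auto simp: Lv_def INFM_nat_le walk_Cyl)
next
  fix x assume A: "x \<in> {\<omega> \<in> space M. (\<forall>m. \<exists>n. m \<le> n \<and> \<omega> \<in> Cyl n {l. wl l y \<le> c}) \<and> \<omega> \<notin> Dn y}"
  then obtain N where "x \<in> Cyl N {l. wl l y \<le> c}" by blast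
  then have "x \<in> \<Omega>" by (simp add: Cyl_def)
  with A show "x \<in> Lv c y" by (auto simp: Lv_def INFM_nat_le walk_Cyl)
qed

lemma Lv_sets[measurable]: "Lv c y \<in> sets M"
  unfolding Lv_eq by measurable

lemma Omega_AE: "AE \<omega> in M. \<omega> \<in> \<Omega>"
proof -
  have "AE \<omega> in M. stream_all (\<lambda>f. f \<in> S) \<omega>"
    by (rule prob_space.AE_stream_all[OF prob_space_measure_pmf])
       (auto simp: pred_def AE_measure_pmf)
  then show ?thesis by (rule eventually_mono) (auto simp: stream_all_def streams_iff_snth snth_sset)
qed

lemma Omega_1: "emeasure M \<Omega> = 1"
  using prob_space.emeasure_eq_1_AE[OF prob_M Omega_sets Omega_AE] .

lemma null_compl: "UNIV - \<Omega> \<in> null_sets M"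
proof -
  have "{x\<in>space M. \<not> x \<in> \<Omega>} \<in> null_sets M"
    using Omega_AE by (subst AE_iff_null[symmetric]) (auto simp: Compl_eq[symmetric] Compl_eq_Diff_UNIV intro: sets.compl_sets[of _ M, simplified])
  then show ?thesis by (simp add: set_diff_eq)
qed


lemma phi_minus_eq: "phi_minus \<mu> y = measure M (Dn y)"
proof -
  let ?E = "{\<omega> \<in> space (walk_space \<mu>). filterlim (\<lambda>n. walk \<omega> n y) at_bot sequentially}"
  have eq: "?E = Dn y \<union> (?E - \<Omega>)" by (auto simp: Dn_def walk_space_def)
  have "?E - \<Omega> \<in> null_sets (completion M)"
    by (rule null_sets_completion_subset[OF _ null_sets_completionI[OF null_compl]]) auto
  then have "measure (completion M) ?E = measure (completion M) (Dn y)"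
    by (subst eq) (rule measure_Un_null_set, auto)
  then show ?thesis by (simp add: phi_minus_def walk_space_def)
qed

lemma phi_plus_eq: "phi_plus \<mu> y = measure M (Up y)"
proof -
  let ?E = "{\<omega> \<in> space (walk_space \<mu>). filterlim (\<lambda>n. walk \<omega> n y) at_top sequentially}"
  have eq: "?E = Up y \<union> (?E - \<Omega>)" by (auto simp: Up_def walk_space_def)
  have "?E - \<Omega> \<in> null_sets (completion M)"
    by (rule null_sets_completion_subset[OF _ null_sets_completionI[OF null_compl]]) auto
  then have "measure (completion M) ?E = measure (completion M) (Up y)"
    by (subst eq) (rule measure_Un_null_set, auto)
  then show ?thesis by (simp add: phi_plus_def walk_space_def)
qed

lemma step:
  assumes "E \<in> sets M" "E \<subseteq> \<Omega>"
  shows "emeasure M E = (\<integral>\<^sup>+t. emeasure M {x\<in>\<Omega>. t ## x \<in> E} \<partial>measure_pmf \<mu>)"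
proof -
  have "emeasure M E = (\<integral>\<^sup>+t. emeasure M {x\<in>space M. t ## x \<in> E} \<partial>measure_pmf \<mu>)"
    by (rule prob_space.emeasure_stream_space[OF prob_space_measure_pmf assms(1)])
  also have "\<dots> = (\<integral>\<^sup>+t. emeasure M {x\<in>\<Omega>. t ## x \<in> E} \<partial>measure_pmf \<mu>)"
  proof (rule nn_integral_cong_AE)
    show "AE t in measure_pmf \<mu>. emeasure M {x\<in>space M. t ## x \<in> E} = emeasure M {x\<in>\<Omega>. t ## x \<in> E}"
      using AE_measure_pmf[of \<mu>]
    proof (rule eventually_mono)
      fix t assume "t \<in> S"
      then have "{x\<in>space M. t ## x \<in> E} = {x\<in>\<Omega>. t ## x \<in> E}"
        using assms(2) by (auto simp: streams_Stream)
      then show "emeasure M {x\<in>space M. t ## x \<in> E} = emeasure M {x\<in>\<Omega>. t ## x \<in> E}" by simp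
    qed
  qed
  finally show ?thesis .
qed

lemma S_mono: "f \<in> S \<Longrightarrow> strict_mono f"
  using homeo by (auto simp: homeo_plus_def)

lemma S_cont: "f \<in> S \<Longrightarrow> isCont f x"
  using homeo by (auto simp: homeo_plus_def homeomorphism_def continuous_on_eq_continuous_at)

lemma walk_mono: "\<omega> \<in> \<Omega> \<Longrightarrow> y \<le> z \<Longrightarrow> walk \<omega> n y \<le> walk \<omega> n z"
proof (induct n)
  case (Suc n)
  have "\<omega> !! n \<in> S" using Suc(2) by (simp add: streams_iff_snth)
  then show ?case using Suc by (simp add: strict_mono_less_eq S_mono)
qed simp

lemma Dn_mono: assumes "y \<le> z" shows "Dn z \<subseteq> Dn y"
proof
  fix \<omega> assume A: "\<omega> \<in> Dn z"
  then have O: "\<omega> \<in> \<Omega>" by (simp add: Dn_def)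
  show "\<omega> \<in> Dn y" unfolding Dn_def filterlim_at_bot
  proof (intro CollectI conjI allI O)
    fix Z :: real
    have "eventually (\<lambda>n. walk \<omega> n z \<le> Z) sequentially" using A by (simp add: Dn_def filterlim_at_bot)
    then show "eventually (\<lambda>n. walk \<omega> n y \<le> Z) sequentially"
      by (rule eventually_mono) (meson order_trans walk_mono[OF O assms])
  qed
qed

lemma Dn_shift: assumes "t \<in> S" shows "{x\<in>\<Omega>. t ## x \<in> Dn y} = Dn (t y)"
proof -
  have "filterlim (\<lambda>n. walk (t ## x) n y) at_bot sequentially \<longleftrightarrow> filterlim (\<lambda>n. walk x n (t y)) at_bot sequentially" for x
    using filterlim_sequentially_Suc[of "\<lambda>n. walk (t ## x) n y" at_bot] by (simp only: walk_Stream)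
  then show ?thesis using assms by (auto simp: Dn_def streams_Stream)
qed

lemma Cyl_shift: "t \<in> S \<Longrightarrow> {x\<in>\<Omega>. t ## x \<in> Cyl (Suc n) B} = Cyl n {l. t # l \<in> B}"
  by (auto simp: Cyl_def streams_Stream)

lemma Dn_lower:
  assumes "t \<in> S"
  shows "ennreal (pmf \<mu> t) * emeasure M (Dn (t y)) \<le> emeasure M (Dn y)"
proof -
  have "emeasure M (Dn y) = (\<integral>\<^sup>+s. emeasure M {x\<in>\<Omega>. s ## x \<in> Dn y} \<partial>measure_pmf \<mu>)"
    by (rule step) (auto simp: Dn_sub)
  also have "\<dots> = (\<integral>\<^sup>+s. emeasure M (Dn (s y)) \<partial>measure_pmf \<mu>)"
    by (rule nn_integral_cong_AE) (rule eventually_mono[OF AE_measure_pmf], simp add: Dn_shift)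
  also have "\<dots> \<ge> (\<integral>\<^sup>+s. emeasure M (Dn (t y)) * indicator {t} s \<partial>measure_pmf \<mu>)"
    by (rule nn_integral_mono) (auto split: split_indicator)
  also have "(\<integral>\<^sup>+s. emeasure M (Dn (t y)) * indicator {t} s \<partial>measure_pmf \<mu>) = emeasure M (Dn (t y)) * pmf \<mu> t"
    by (simp add: nn_integral_cmult_indicator emeasure_pmf_single)
  finally show ?thesis by (simp add: mult.commute)
qed


end

sublocale wsetting \<subseteq> P: prob_space "stream_space (measure_pmf \<mu>)"
  by (rule prob_M)

context wsetting
begin

lemma emeasure_real: "emeasure M A = ennreal (measure M A)"
  by (rule P.emeasure_eq_measure)

lemma b_anti: "y \<le> z \<Longrightarrow> measure M (Dn z) \<le> measure M (Dn y)"
  by (rule P.finite_measure_mono[OF Dn_mono]) auto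

lemma b_lower:
  assumes "t \<in> S"
  shows "pmf \<mu> t * measure M (Dn (t y)) \<le> measure M (Dn y)"
  using Dn_lower[OF assms, of y] by (simp add: emeasure_real ennreal_mult''[symmetric])

lemma b_pos:
  assumes sh: "shiftable \<mu>" and y0: "measure M (Dn y0) > 0"
  shows "measure M (Dn z) > 0"
proof (rule ccontr)
  assume "\<not> measure M (Dn z) > 0"
  then have z0: "measure M (Dn z) \<le> 0" by simp
  define G where "G = {w. measure M (Dn w) > 0}"
  have y0G: "y0 \<in> G" using y0 by (simp add: G_def)
  have ltz: "w < z" if "w \<in> G" for w
  proof (rule ccontr)
    assume "\<not> w < z"
    then have "measure M (Dn w) \<le> measure M (Dn z)" by (intro b_anti) simp
    with z0 that show False by (simp add: G_def)
  qed
  have bdd: "bdd_above G" using ltz by (auto intro!: bdd_aboveI[of _ z] less_imp_le)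
  define s where "s = Sup G"
  have Gne: "G \<noteq> {}" using y0G by auto
  obtain g where gS: "g \<in> S" and gs: "g s < s" using sh by (auto simp: shiftable_def)
  have "isCont g s" using S_cont[OF gS] .
  then have "g \<midarrow>s\<rightarrow> g s" by (simp add: isCont_def)
  from LIM_D[OF this, of "s - g s"] gs obtain d where d: "d > 0"
    and dd: "\<And>x. x \<noteq> s \<and> norm (x - s) < d \<Longrightarrow> norm (g x - g s) < s - g s" by auto
  define w where "w = s + d / 2"
  have "norm (g w - g s) < s - g s" using d by (intro dd) (auto simp: w_def)
  then have gw: "g w < s" by auto
  then obtain v where vG: "v \<in> G" and gv: "g w < v"
    using less_cSup_iff[OF Gne bdd] by (auto simp: s_def)
  have "0 < measure M (Dn v)" using vG by (simp add: G_def)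
  also have "\<dots> \<le> measure M (Dn (g w))" using gv by (intro b_anti) simp
  finally have pos: "0 < measure M (Dn (g w))" .
  have "0 < pmf \<mu> g" using gS by (simp add: pmf_positive)
  with pos have "0 < pmf \<mu> g * measure M (Dn (g w))" by simp
  also have "\<dots> \<le> measure M (Dn w)" by (rule b_lower[OF gS])
  finally have "w \<in> G" by (simp add: G_def)
  then have "w \<le> s" unfolding s_def by (rule cSup_upper[OF _ bdd])
  with d show False by (simp add: w_def)
qed

lemma Cyl_sub: "Cyl n B \<subseteq> \<Omega>" by (auto simp: Cyl_def)

lemma shift_diff: "t \<in> S \<Longrightarrow> {x\<in>\<Omega>. t ## x \<in> Cyl (Suc n) B - Dn y} = Cyl n {l. t # l \<in> B} - Dn (t y)"
  using Cyl_shift[of t n B] Dn_shift[of t y] by blast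

lemma markov:
  assumes "\<forall>l\<in>B. wl l y \<le> c"
  shows "emeasure M (Cyl n B - Dn y) \<le> ennreal (1 - measure M (Dn c)) * emeasure M (Cyl n B)"
  using assms
proof (induct n arbitrary: y B)
  case 0
  show ?case
  proof (cases "[] \<in> B")
    case True
    then have yc: "y \<le> c" using 0 by auto
    have C: "Cyl 0 B = \<Omega>" using True by (auto simp: Cyl_def)
    have m1: "measure M \<Omega> = 1" using Omega_1 by (simp add: emeasure_real)
    have "emeasure M (\<Omega> - Dn y) = ennreal (1 - measure M (Dn y))"
      using P.finite_measure_Diff[OF Omega_sets Dn_sets Dn_sub] m1
      by (simp add: emeasure_real Dn_sub Int_absorb2)
    also have "\<dots> \<le> ennreal (1 - measure M (Dn c))"
      using b_anti[OF yc] by (simp add: ennreal_leI)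
    finally show ?thesis using C Omega_1 by simp
  next
    case False
    then have "Cyl 0 B = {}" by (auto simp: Cyl_def)
    then show ?thesis by simp
  qed
next
  case (Suc n)
  have "emeasure M (Cyl (Suc n) B - Dn y) =
      (\<integral>\<^sup>+t. emeasure M {x\<in>\<Omega>. t ## x \<in> Cyl (Suc n) B - Dn y} \<partial>measure_pmf \<mu>)"
    by (rule step) (use Cyl_sub in auto)
  also have "\<dots> = (\<integral>\<^sup>+t. emeasure M (Cyl n {l. t # l \<in> B} - Dn (t y)) \<partial>measure_pmf \<mu>)"
    by (rule nn_integral_cong_AE) (rule eventually_mono[OF AE_measure_pmf], simp only: shift_diff)
  also have "\<dots> \<le> (\<integral>\<^sup>+t. ennreal (1 - measure M (Dn c)) * emeasure M (Cyl n {l. t # l \<in> B}) \<partial>measure_pmf \<mu>)"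
    by (rule nn_integral_mono) (rule Suc(1), use Suc(2) in auto)
  also have "\<dots> = ennreal (1 - measure M (Dn c)) * (\<integral>\<^sup>+t. emeasure M (Cyl n {l. t # l \<in> B}) \<partial>measure_pmf \<mu>)"
    by (rule nn_integral_cmult) simp
  also have "(\<integral>\<^sup>+t. emeasure M (Cyl n {l. t # l \<in> B}) \<partial>measure_pmf \<mu>) = emeasure M (Cyl (Suc n) B)"
  proof -
    have "emeasure M (Cyl (Suc n) B) = (\<integral>\<^sup>+t. emeasure M {x\<in>\<Omega>. t ## x \<in> Cyl (Suc n) B} \<partial>measure_pmf \<mu>)"
      by (rule step) (use Cyl_sub in auto)
    also have "\<dots> = (\<integral>\<^sup>+t. emeasure M (Cyl n {l. t # l \<in> B}) \<partial>measure_pmf \<mu>)"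
      by (rule nn_integral_cong_AE) (rule eventually_mono[OF AE_measure_pmf], simp add: Cyl_shift)
    finally show ?thesis by simp
  qed
  finally show ?case .
qed


lemma Lv_cyl:
  "emeasure M (Lv c y \<inter> Cyl m B) \<le> ennreal (1 - measure M (Dn c)) * emeasure M (Cyl m B)"
proof -
  define B' where "B' n = {l. take m l \<in> B \<and> wl l y \<le> c \<and> (\<forall>k. m \<le> k \<and> k < m + n \<longrightarrow> c < wl (take k l) y)}" for n
  define V where "V n = Cyl (m + n) (B' n)" for n
  have sub1: "Lv c y \<inter> Cyl m B \<subseteq> (\<Union>n. V n - Dn y)"
  proof
    fix \<omega> assume A: "\<omega> \<in> Lv c y \<inter> Cyl m B"
    then have O: "\<omega> \<in> \<Omega>" and inf: "\<exists>\<^sub>\<infinity>n. walk \<omega> n y \<le> c" and nd: "\<omega> \<notin> Dn y"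
      and st: "stake m \<omega> \<in> B" by (auto simp: Lv_def Cyl_def)
    from inf obtain k where "m \<le> k \<and> walk \<omega> k y \<le> c" by (auto simp: INFM_nat_le)
    define k0 where "k0 = (LEAST k. m \<le> k \<and> walk \<omega> k y \<le> c)"
    have k0: "m \<le> k0 \<and> walk \<omega> k0 y \<le> c" unfolding k0_def by (rule LeastI) fact
    have min: "c < walk \<omega> j y" if "m \<le> j" "j < k0" for j
      using not_less_Least[of j "\<lambda>k. m \<le> k \<and> walk \<omega> k y \<le> c"] that by (auto simp: k0_def)
    have "\<omega> \<in> V (k0 - m)"
      unfolding V_def Cyl_def B'_def using k0 O st min
      by (auto simp: take_stake min_def walk_stake)
    then show "\<omega> \<in> (\<Union>n. V n - Dn y)" using nd by auto
  qed
  have disj: "disjoint_family V"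
  proof -
    have "V i \<inter> V j = {}" if "i < j" for i j
    proof -
      have "False" if "\<omega> \<in> V i" "\<omega> \<in> V j" for \<omega>
      proof -
        from that(2) have "c < wl (take (m + i) (stake (m + j) \<omega>)) y"
          using \<open>i < j\<close> by (auto simp: V_def Cyl_def B'_def)
        moreover from that(1) have "wl (stake (m + i) \<omega>) y \<le> c"
          by (auto simp: V_def Cyl_def B'_def)
        ultimately show False using \<open>i < j\<close> by (simp add: take_stake min_def)
      qed
      then show ?thesis by blast
    qed
    then show ?thesis unfolding disjoint_family_on_def
      by (metis inf_commute linorder_neqE_nat)
  qed
  have sub2: "(\<Union>n. V n) \<subseteq> Cyl m B"
    by (auto simp: V_def Cyl_def B'_def take_stake min_def)
  have "emeasure M (Lv c y \<inter> Cyl m B) \<le> emeasure M (\<Union>n. V n - Dn y)"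
    by (rule emeasure_mono[OF sub1]) (auto simp: V_def)
  also have "\<dots> \<le> (\<Sum>n. emeasure M (V n - Dn y))"
    by (rule emeasure_subadditive_countably) (auto simp: V_def)
  also have "\<dots> \<le> (\<Sum>n. ennreal (1 - measure M (Dn c)) * emeasure M (V n))"
    unfolding V_def by (intro suminf_le summableI markov) (auto simp: B'_def)
  also have "\<dots> = ennreal (1 - measure M (Dn c)) * emeasure M (\<Union>n. V n)"
    using suminf_emeasure[of V M] disj by (simp add: V_def image_subset_iff)
  also have "\<dots> \<le> ennreal (1 - measure M (Dn c)) * emeasure M (Cyl m B)"
    by (intro mult_left_mono emeasure_mono sub2) auto
  finally show ?thesis .
qed


lemma sstart_Cyl: "l \<in> lists S \<Longrightarrow> sstart S l = Cyl (length l) {l}"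
  unfolding Cyl_eq by auto

lemma sets_restrict: "sets (restrict_space M \<Omega>) = sigma_sets \<Omega> (sstart S ` lists S \<union> {{}})"
proof -
  have "sstart S ` lists S \<subseteq> Pow \<Omega>"
    using sstart_in_streams[of _ S] by blast
  then show ?thesis
    by (subst sets_restrict_space_cong[OF sets_M])
       (simp add: sets_restrict_stream_space restrict_count_space sets_stream_space_sstart)
qed

lemma sigma_sub: "A \<in> sigma_sets \<Omega> (sstart S ` lists S \<union> {{}}) \<Longrightarrow> A \<in> sets M \<and> A \<subseteq> \<Omega>"
  using sets_restrict sets_restrict_space_iff[of \<Omega> M A] by auto

definition sd :: "'a set \<Rightarrow> 'a set \<Rightarrow> 'a set" where
  "sd A B = (A - B) \<union> (B - A)"

lemma Cyl_compl: "Cyl m (- B) = \<Omega> - Cyl m B"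
  by (auto simp: Cyl_def)

lemma approx:
  assumes "E \<in> sets M" "E \<subseteq> \<Omega>"
  shows "\<forall>e>0. \<exists>m B. measure M (sd E (Cyl m B)) < e"
proof -
  have E: "E \<in> sigma_sets \<Omega> (sstart S ` lists S \<union> {{}})"
    using assms sets_restrict sets_restrict_space_iff[of \<Omega> M E] by auto
  have G: "sstart S ` lists S \<union> {{}} \<subseteq> Pow \<Omega>"
    using sstart_in_streams[of _ S] by blast
  from Int_stable_sstart G E show ?thesis
  proof (induction rule: sigma_sets_induct_disjoint)
    case (basic A)
    then show ?case
    proof
      assume "A \<in> sstart S ` lists S"
      then obtain l where "l \<in> lists S" "A = Cyl (length l) {l}" using sstart_Cyl by auto
      then show ?thesis by (auto simp: sd_def intro!: exI[of _ "length l"] exI[of _ "{l}"])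
    next
      assume "A \<in> {{}}"
      then show ?thesis by (auto simp: sd_def Cyl_def intro!: exI[of _ 0] exI[of _ "{}"])
    qed
  next
    case empty
    then show ?case by (auto simp: sd_def Cyl_def intro!: exI[of _ 0] exI[of _ "{}"])
  next
    case (compl A)
    have AO: "A \<subseteq> \<Omega>" using sigma_sub[OF compl(1)] by auto
    show ?case
    proof (intro allI impI)
      fix e :: real assume "e > 0"
      with compl(2) obtain m B where mB: "measure M (sd A (Cyl m B)) < e" by auto
      have "sd (\<Omega> - A) (Cyl m (- B)) = sd A (Cyl m B)"
        using AO Cyl_sub[of m B] by (auto simp: sd_def Cyl_compl)
      with mB show "\<exists>m B. measure M (sd (\<Omega> - A) (Cyl m B)) < e" by metis
    qed
  next
    case (union A)
    have As: "\<And>i. A i \<in> sets M" using sigma_sub union(2) by auto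
    show ?case
    proof (intro allI impI)
      fix e :: real assume e: "e > 0"
      define F where "F N = (\<Union>i<N. A i)" for N
      have Fs: "F N \<in> sets M" for N using As by (auto simp: F_def)
      have "(\<lambda>N. measure M (F N)) \<longlonglongrightarrow> measure M (\<Union>N. F N)"
        by (rule P.finite_Lim_measure_incseq) (use Fs in \<open>auto simp: incseq_def F_def\<close>, force)
      moreover have "(\<Union>N. F N) = (\<Union>i. A i)" by (auto simp: F_def)
      ultimately have "(\<lambda>N. measure M (F N)) \<longlonglongrightarrow> measure M (\<Union>i. A i)" by simp
      from order_tendstoD(1)[OF this, of "measure M (\<Union>i. A i) - e / 2"] e
      obtain N where N: "measure M (\<Union>i. A i) - e / 2 < measure M (F N)"
        by (auto simp: eventually_sequentially)
      have FU: "F N \<subseteq> (\<Union>i. A i)" by (auto simp: F_def)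
      have mdiff: "measure M ((\<Union>i. A i) - F N) < e / 2"
        using P.finite_measure_Diff[OF _ Fs FU] As N by auto
      define e' where "e' = e / (2 * (real N + 1))"
      have e': "e' > 0" using e by (simp add: e'_def)
      have "\<forall>i. \<exists>m B. measure M (sd (A i) (Cyl m B)) < e'" using union(3) e' by auto
      then obtain mf Bf where mB: "\<And>i. measure M (sd (A i) (Cyl (mf i) (Bf i))) < e'" by metis
      define K where "K = (\<Sum>i<N. mf i)"
      define BB where "BB = {l. \<exists>i<N. take (mf i) l \<in> Bf i}"
      have mK: "i < N \<Longrightarrow> mf i \<le> K" for i
        unfolding K_def by (rule member_le_sum) auto
      have CK: "Cyl K BB = (\<Union>i<N. Cyl (mf i) (Bf i))"
        using mK by (auto simp: Cyl_def BB_def take_stake min_def)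
      have sub: "sd (\<Union>i. A i) (Cyl K BB) \<subseteq> ((\<Union>i. A i) - F N) \<union> (\<Union>i<N. sd (A i) (Cyl (mf i) (Bf i)))"
        unfolding CK by (auto simp: sd_def F_def)
      have sdsets: "sd (A i) (Cyl (mf i) (Bf i)) \<in> sets M" for i
        using As by (auto simp: sd_def)
      have "measure M (sd (\<Union>i. A i) (Cyl K BB)) \<le> measure M (((\<Union>i. A i) - F N) \<union> (\<Union>i<N. sd (A i) (Cyl (mf i) (Bf i))))"
        by (rule P.finite_measure_mono[OF sub]) (use As Fs sdsets in auto)
      also have "\<dots> \<le> measure M ((\<Union>i. A i) - F N) + measure M (\<Union>i<N. sd (A i) (Cyl (mf i) (Bf i)))"
        by (rule measure_Un_le) (use As Fs sdsets in auto)
      also have "measure M (\<Union>i<N. sd (A i) (Cyl (mf i) (Bf i))) \<le> (\<Sum>i<N. measure M (sd (A i) (Cyl (mf i) (Bf i))))"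
        by (rule P.finite_measure_subadditive_finite) (use sdsets in auto)
      also have "\<dots> \<le> (\<Sum>i<N. e')"
        by (rule sum_mono) (use mB in \<open>auto intro: less_imp_le\<close>)
      also have "\<dots> \<le> e / 2"
        using e by (simp add: e'_def field_simps)
      finally show "\<exists>m B. measure M (sd (\<Union>i. A i) (Cyl m B)) < e"
        using mdiff by (intro exI[of _ K] exI[of _ BB]) linarith
    qed
  qed
qed


lemma Lv_null:
  assumes d: "measure M (Dn c) > 0"
  shows "measure M (Lv c y) = 0"
proof (rule ccontr)
  define x where "x = measure M (Lv c y)"
  define \<delta> where "\<delta> = measure M (Dn c)"
  assume "measure M (Lv c y) \<noteq> 0"
  then have xpos: "x > 0" unfolding x_def using measure_nonneg[of M "Lv c y"] by linarith
  have d1: "\<delta> \<le> 1" unfolding \<delta>_def by (rule P.prob_le_1)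
  have dpos: "\<delta> > 0" using d by (simp add: \<delta>_def)
  define e where "e = \<delta> * x / 4"
  have e: "e > 0" using xpos dpos by (simp add: e_def)
  obtain m B where mB: "measure M (sd (Lv c y) (Cyl m B)) < e"
    using approx[OF Lv_sets, of c y] e by (auto simp: Lv_def)
  let ?C = "Cyl m B"
  have "emeasure M (Lv c y \<inter> ?C) \<le> ennreal (1 - \<delta>) * emeasure M ?C"
    using Lv_cyl by (simp add: \<delta>_def)
  then have LC: "measure M (Lv c y \<inter> ?C) \<le> (1 - \<delta>) * measure M ?C"
    using d1 by (simp add: emeasure_real ennreal_mult''[symmetric])
  have sds: "sd (Lv c y) ?C \<in> sets M" by (auto simp: sd_def)
  have "x \<le> measure M ((Lv c y \<inter> ?C) \<union> sd (Lv c y) ?C)"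
    unfolding x_def by (rule P.finite_measure_mono) (auto simp: sd_def)
  also have "\<dots> \<le> measure M (Lv c y \<inter> ?C) + measure M (sd (Lv c y) ?C)"
    by (rule measure_Un_le) (auto simp: sd_def)
  finally have x1: "x \<le> (1 - \<delta>) * measure M ?C + e" using LC mB by linarith
  have "measure M ?C \<le> measure M (Lv c y \<union> sd (Lv c y) ?C)"
    by (rule P.finite_measure_mono) (auto simp: sd_def)
  also have "\<dots> \<le> measure M (Lv c y) + measure M (sd (Lv c y) ?C)"
    by (rule measure_Un_le) (auto simp: sd_def)
  finally have c1: "measure M ?C \<le> x + e" using mB by (simp add: x_def)
  have "(1 - \<delta>) * measure M ?C \<le> (1 - \<delta>) * (x + e)"
    using d1 c1 by (intro mult_left_mono) auto
  with x1 have "x \<le> (1 - \<delta>) * (x + e) + e" by linarith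
  then have "\<delta> * x \<le> (2 - \<delta>) * e" by (simp add: algebra_simps)
  also have "\<dots> \<le> 2 * e" using dpos e by simp
  finally show False using xpos dpos by (simp add: e_def)
qed

lemma main:
  assumes sh: "shiftable \<mu>" and y0: "measure M (Dn y0) > 0"
  shows "measure M (Up z) + measure M (Dn z) = 1"
proof -
  have bp: "\<And>c. measure M (Dn c) > 0" using b_pos[OF sh y0] .
  have Lnull: "Lv c z \<in> null_sets M" for c
    using Lv_null[OF bp, of c z] by (simp add: null_sets_def emeasure_real)
  have UN: "(\<Union>k::nat. Lv (real k) z) \<in> null_sets M"
    using Lnull by (intro null_sets_UN) auto
  have incl: "\<Omega> - (Up z \<union> Dn z) \<subseteq> (\<Union>k::nat. Lv (real k) z)"
  proof
    fix \<omega> assume A: "\<omega> \<in> \<Omega> - (Up z \<union> Dn z)"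
    then have O: "\<omega> \<in> \<Omega>" and nu: "\<not> filterlim (\<lambda>n. walk \<omega> n z) at_top sequentially"
      and nd: "\<omega> \<notin> Dn z" by (auto simp: Up_def)
    from nu obtain Z where "\<not> eventually (\<lambda>n. Z \<le> walk \<omega> n z) sequentially"
      by (auto simp: filterlim_at_top)
    then have fr: "\<forall>N. \<exists>n\<ge>N. walk \<omega> n z < Z" by (auto simp: eventually_sequentially not_le)
    obtain k :: nat where "Z \<le> real k" using real_arch_simple by blast
    with fr have "\<exists>\<^sub>\<infinity>n. walk \<omega> n z \<le> real k"
      unfolding INFM_nat_le by (meson less_imp_le order_less_le_trans)
    then have "\<omega> \<in> Lv (real k) z" using O nd by (simp add: Lv_def)
    then show "\<omega> \<in> (\<Union>k::nat. Lv (real k) z)" by blast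
  qed
  have Nnull: "\<Omega> - (Up z \<union> Dn z) \<in> null_sets M"
    by (rule null_sets_subset[OF UN _ incl]) auto
  have disj: "Up z \<inter> Dn z = {}"
  proof -
    have False if "\<omega> \<in> Up z" "\<omega> \<in> Dn z" for \<omega>
    proof -
      have "eventually (\<lambda>n. 1 \<le> walk \<omega> n z) sequentially" using that(1)
        by (auto simp: Up_def filterlim_at_top)
      moreover have "eventually (\<lambda>n. walk \<omega> n z \<le> 0) sequentially" using that(2)
        by (auto simp: Dn_def filterlim_at_bot)
      ultimately have "eventually (\<lambda>n. False) sequentially"
        by eventually_elim simp
      then show False by simp
    qed
    then show ?thesis by blast
  qed
  have "measure M (Up z) + measure M (Dn z) = measure M (Up z \<union> Dn z)"
    by (rule P.finite_measure_Union[symmetric]) (use disj in auto)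
  also have "\<dots> = measure M \<Omega> - measure M (\<Omega> - (Up z \<union> Dn z))"
    using P.finite_measure_Diff[of \<Omega> "Up z \<union> Dn z"] Up_sub Dn_sub by auto
  also have "\<dots> = 1"
    using null_setsD1[OF Nnull] Omega_1 by (simp add: emeasure_real)
  finally show ?thesis .
qed

end

theorem proposition2:
  fixes \<mu> :: "(real \<Rightarrow> real) pmf"
  assumes "\<forall>f \<in> set_pmf \<mu>. homeo_plus f"
    and "shiftable \<mu>"
    and "\<exists>x y. phi_plus \<mu> x > 0 \<and> phi_minus \<mu> y > 0"
  shows "\<forall>z. phi_plus \<mu> z + phi_minus \<mu> z = 1"
proof -
  interpret wsetting \<mu> using assms(1) by unfold_locales
  from assms(3) obtain y where "phi_minus \<mu> y > 0" by auto
  then have "measure M (Dn y) > 0" by (simp add: phi_minus_eq)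
  then show ?thesis using main[OF assms(2)] by (simp add: phi_plus_eq phi_minus_eq)
qed

end
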